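(* Let $G$ be a finite abelian group. Then $\delta(G)\le (2|G|)^{3|G|+1}$.
   Context: $G$ is written additively. A sequence over $G$ is a finite unordered list of elements of $G$ with repetitions (an element of the free abelian monoid $\mathcal{F}(G)$). A zero-sum sequence has sum $0$; a minimal zero-sum sequence is a non-empty zero-sum sequence with no proper non-empty zero-sum subsequence; $\mathcal{A}(G)$ is the set of these. Factorizations are elements of the free abelian monoid $\mathsf{Z}(G)$ over $\mathcal{A}(G)$ (formal unordered products of minimal zero-sum sequences); $\pi:\mathsf{Z}(G)\to\mathcal{F}(G)$ evaluates the product; $|\zeta|$ is the number of factors (with multiplicity); for a zero-sum sequence $B$, $\mathsf{L}(B)=\{|\zeta|: \pi(\zeta)=B\}$. For $\zeta,\xi\in\mathsf{Z}(G)$, $\mathsf{d}(\zeta,\xi)=\max\{|\gcd(\zeta,\xi)^{-1}\zeta|,|\gcd(\zeta,\xi)^{-1}\xi|\}$. Two distinct $k,\ell\in\mathsf{L}(B)$ are adjacent lengths of $B$ if no element of $\mathsf{L}(B)$ lies strictly between them. For $\zeta\in\mathsf{Z}(G)$, $\delta(\zeta)$ is the smallest $m\in\mathbb{N}_0$ such that whenever $k\in\mathbb{N}$ and $k$, $|\zeta|$ are adjacent lengths of $\pi(\zeta)$, there is $\xi\in\mathsf{Z}(G)$ with $\pi(\xi)=\pi(\zeta)$, $|\xi|=k$ and $\mathsf{d}(\xi,\zeta)\le m$. The successive distance is $\delta(G)=\sup\{\delta(\zeta):\zeta\in\mathsf{Z}(G)\}$. *)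

theory Defs
  imports Main "HOL-Library.Multiset" "HOL-Library.Extended_Nat"
begin

text \<open>Finite abelian group G = a type of class finite + ab_group_add (written additively).
  Sequences over G are multisets over G; factorizations are multisets of atoms.\<close>

definition zero_sum :: "'a::ab_group_add multiset \<Rightarrow> bool" where
  "zero_sum S \<longleftrightarrow> sum_mset S = 0"

definition minimal_zero_sum :: "'a::ab_group_add multiset \<Rightarrow> bool" where
  "minimal_zero_sum S \<longleftrightarrow> S \<noteq> {#} \<and> zero_sum S \<and>
     (\<forall>T. T \<subseteq># S \<and> T \<noteq> {#} \<and> zero_sum T \<longrightarrow> T = S)"

definition is_factorization :: "'a::ab_group_add multiset multiset \<Rightarrow> bool" where
  "is_factorization z \<longleftrightarrow> (\<forall>A \<in># z. minimal_zero_sum A)"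

text \<open>pi evaluates the product in the free abelian monoid F(G).\<close>
definition fact_pi :: "'a multiset multiset \<Rightarrow> 'a multiset" where
  "fact_pi z = sum_mset z"

definition lengths :: "'a::ab_group_add multiset \<Rightarrow> nat set" where
  "lengths B = {size z | z. is_factorization z \<and> fact_pi z = B}"

definition fact_dist :: "'a multiset multiset \<Rightarrow> 'a multiset multiset \<Rightarrow> nat" where
  "fact_dist z x = max (size (z - (z \<inter># x))) (size (x - (z \<inter># x)))"

definition adjacent_lengths :: "'a::ab_group_add multiset \<Rightarrow> nat \<Rightarrow> nat \<Rightarrow> bool" where
  "adjacent_lengths B k l \<longleftrightarrow> k \<in> lengths B \<and> l \<in> lengths B \<and> k \<noteq> l \<and>
     \<not> (\<exists>m \<in> lengths B. min k l < m \<and> m < max k l)"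

definition delta_fact :: "'a::ab_group_add multiset multiset \<Rightarrow> nat" where
  "delta_fact z = (LEAST m::nat. \<forall>k::nat. k \<ge> 1 \<and> adjacent_lengths (fact_pi z) k (size z) \<longrightarrow>
      (\<exists>x. is_factorization x \<and> fact_pi x = fact_pi z \<and> size x = k \<and> fact_dist x z \<le> m))"

definition successive_distance :: "'a::{finite,ab_group_add} itself \<Rightarrow> enat" where
  "successive_distance _ = Sup ((\<lambda>z. enat (delta_fact z)) ` {z :: 'a multiset multiset. is_factorization z})"

end

theory Submission
  imports Defs "HOL-Library.Cardinality" "HOL-Library.FuncSet"
begin

lemma kernel_exists:
  fixes a :: "'r \<Rightarrow> nat \<Rightarrow> real"
  assumes "finite R" "finite F" "card F > card R"
  shows "\<exists>z. (\<exists>i\<in>F. z i \<noteq> 0) \<and> (\<forall>r\<in>R. (\<Sum>i\<in>F. z i * a r i) = 0)"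
  using assms
proof (induction R arbitrary: F a rule: finite_induct)
  case empty
  then obtain i where "i \<in> F" by (metis card.empty card_gt_0_iff equals0I)
  then show ?case by (intro exI[of _ "\<lambda>_. 1"]) auto
next
  case (insert r0 R F a)
  have cardI: "card (insert r0 R) = Suc (card R)" using insert by simp
  show ?case
  proof (cases "\<forall>i\<in>F. a r0 i = 0")
    case True
    obtain z where z: "\<exists>i\<in>F. z i \<noteq> 0" "\<forall>r\<in>R. (\<Sum>i\<in>F. z i * a r i) = 0"
      using insert.IH[of F a] insert.prems cardI by auto
    then show ?thesis using True by (intro exI[of _ z]) auto
  next
    case False
    then obtain j where j: "j \<in> F" "a r0 j \<noteq> 0" by auto
    define F' where "F' = F - {j}"
    define a' where "a' = (\<lambda>r i. a r i - a r0 i / a r0 j * a r j)"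
    have fF': "finite F'" using insert.prems F'_def by simp
    have cF': "card F' > card R" using insert.prems cardI j F'_def by (simp add: card_Diff_singleton)
    obtain z' where z': "\<exists>i\<in>F'. z' i \<noteq> 0" "\<forall>r\<in>R. (\<Sum>i\<in>F'. z' i * a' r i) = 0"
      using insert.IH[OF fF' cF', of a'] by blast
    define w where "w = - (\<Sum>i\<in>F'. z' i * a r0 i) / a r0 j"
    define z where "z = z'(j := w)"
    have FF: "F = insert j F'" "j \<notin> F'" using j F'_def by auto
    have sumF: "(\<Sum>i\<in>F. z i * h i) = (\<Sum>i\<in>F'. z' i * h i) + w * h j" for h
    proof -
      have "(\<Sum>i\<in>F. z i * h i) = z j * h j + (\<Sum>i\<in>F'. z i * h i)"
        using FF fF' by simp
      also have "(\<Sum>i\<in>F'. z i * h i) = (\<Sum>i\<in>F'. z' i * h i)"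
        using FF by (intro sum.cong) (auto simp: z_def)
      finally show ?thesis by (simp add: z_def)
    qed
    have nz: "\<exists>i\<in>F. z i \<noteq> 0" using z' FF by (auto simp: z_def)
    have r0: "(\<Sum>i\<in>F. z i * a r0 i) = 0" using sumF j by (simp add: w_def)
    have rR: "(\<Sum>i\<in>F. z i * a r i) = 0" if "r \<in> R" for r
    proof -
      have "0 = (\<Sum>i\<in>F'. z' i * a' r i)" using z' that by auto
      also have "\<dots> = (\<Sum>i\<in>F'. z' i * a r i) - (\<Sum>i\<in>F'. z' i * a r0 i) / a r0 j * a r j"
        by (simp add: a'_def right_diff_distrib sum_subtractf sum_distrib_right sum_divide_distrib mult.assoc)
      finally have "(\<Sum>i\<in>F'. z' i * a r i) = - w * a r j" by (simp add: w_def)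
      then show ?thesis using sumF by simp
    qed
    show ?thesis using nz r0 rR by (intro exI[of _ z]) auto
  qed
qed

lemma basic_point:
  fixes a :: "'r \<Rightarrow> nat \<Rightarrow> real" and b :: "'r \<Rightarrow> real"
  assumes R: "finite R" and I: "finite I"
  shows "(\<forall>i\<in>I. 0 \<le> \<nu> i \<and> \<nu> i \<le> 1) \<Longrightarrow> (\<forall>r\<in>R. (\<Sum>i\<in>I. \<nu> i * a r i) = b r) \<Longrightarrow>
    \<exists>\<nu>'. (\<forall>i\<in>I. 0 \<le> \<nu>' i \<and> \<nu>' i \<le> 1) \<and> (\<forall>r\<in>R. (\<Sum>i\<in>I. \<nu>' i * a r i) = b r) \<and>
         card {i\<in>I. 0 < \<nu>' i \<and> \<nu>' i < 1} \<le> card R"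
proof (induction "card {i\<in>I. 0 < \<nu> i \<and> \<nu> i < 1}" arbitrary: \<nu> rule: less_induct)
  case less
  define F where "F = {i\<in>I. 0 < \<nu> i \<and> \<nu> i < 1}"
  have fF: "finite F" using I F_def by simp
  show ?case
  proof (cases "card F \<le> card R")
    case True
    then show ?thesis using less.prems F_def by blast
  next
    case False
    then have "card F > card R" by simp
    then obtain z where z: "\<exists>i\<in>F. z i \<noteq> 0" "\<forall>r\<in>R. (\<Sum>i\<in>F. z i * a r i) = 0"
      using kernel_exists[OF R fF] by blast
    define Z where "Z = {i\<in>F. z i \<noteq> 0}"
    have fZ: "finite Z" "Z \<noteq> {}" using fF z(1) Z_def by auto
    define \<tau> where "\<tau> = (\<lambda>i. if z i > 0 then (1 - \<nu> i) / z i else \<nu> i / (- z i))"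
    define t where "t = Min (\<tau> ` Z)"
    have "t \<in> \<tau> ` Z" using Min_in[of "\<tau> ` Z"] fZ t_def by auto
    then obtain i1 where i1: "i1 \<in> Z" "\<tau> i1 = t" by auto
    have tle: "t \<le> \<tau> i" if "i \<in> Z" for i using fZ that t_def by simp
    have tpos: "t \<ge> 0"
    proof -
      have "\<tau> i1 \<ge> 0" using i1(1) unfolding Z_def F_def \<tau>_def by (auto simp: divide_nonneg_neg)
      then show ?thesis using i1 by simp
    qed
    define z0 where "z0 = (\<lambda>i. if i \<in> F then z i else 0)"
    define \<nu>' where "\<nu>' = (\<lambda>i. \<nu> i + t * z0 i)"
    have range: "0 \<le> \<nu>' i \<and> \<nu>' i \<le> 1" if "i \<in> I" for i
    proof (cases "i \<in> Z")
      case True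
      then have iF: "0 < \<nu> i" "\<nu> i < 1" "z i \<noteq> 0" "i \<in> F" unfolding Z_def F_def by auto
      have "t \<le> \<tau> i" using tle True .
      show ?thesis
      proof (cases "z i > 0")
        case True
        then have "t * z i \<le> (1 - \<nu> i)"
          using \<open>t \<le> \<tau> i\<close> by (simp add: \<tau>_def pos_le_divide_eq)
        moreover have "t * z i \<ge> 0" using True tpos by simp
        ultimately show ?thesis using iF by (simp add: \<nu>'_def z0_def)
      next
        case False
        then have zn: "z i < 0" using iF by simp
        have "t \<le> \<nu> i / (- z i)" using \<open>t \<le> \<tau> i\<close> zn by (simp add: \<tau>_def)
        then have "t * (- z i) \<le> \<nu> i / (- z i) * (- z i)"
          using zn by (intro mult_right_mono) auto
        then have "t * (- z i) \<le> \<nu> i" using zn by simp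
        moreover have "t * z i \<le> 0" using zn tpos by (simp add: mult_nonneg_nonpos)
        ultimately show ?thesis using iF by (simp add: \<nu>'_def z0_def)
      qed
    next
      case False
      then have "z0 i = 0" unfolding z0_def Z_def by auto
      then show ?thesis using less.prems(1) that by (simp add: \<nu>'_def)
    qed
    have cons: "(\<Sum>i\<in>I. \<nu>' i * a r i) = b r" if "r \<in> R" for r
    proof -
      have "(\<Sum>i\<in>I. z0 i * a r i) = (\<Sum>i\<in>F. z i * a r i)"
      proof -
        have "(\<Sum>i\<in>I. z0 i * a r i) = (\<Sum>i\<in>I. if i \<in> F then z i * a r i else 0)"
          unfolding z0_def by (intro sum.cong) auto
        also have "\<dots> = (\<Sum>i\<in>F. z i * a r i)"
          using sum.inter_filter[OF I, of "\<lambda>i. z i * a r i" "\<lambda>i. i \<in> F"] F_def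
          by (simp add: Collect_conj_eq)
        finally show ?thesis .
      qed
      then have "(\<Sum>i\<in>I. z0 i * a r i) = 0" using z(2) that by simp
      have "(\<Sum>i\<in>I. \<nu>' i * a r i) = (\<Sum>i\<in>I. \<nu> i * a r i) + t * (\<Sum>i\<in>I. z0 i * a r i)"
        by (simp add: \<nu>'_def distrib_right sum.distrib sum_distrib_left mult.assoc)
      then show ?thesis using less.prems(2) that \<open>(\<Sum>i\<in>I. z0 i * a r i) = 0\<close> by simp
    qed
    have sub: "{i\<in>I. 0 < \<nu>' i \<and> \<nu>' i < 1} \<subseteq> F - {i1}"
    proof
      fix i assume i: "i \<in> {i\<in>I. 0 < \<nu>' i \<and> \<nu>' i < 1}"
      show "i \<in> F - {i1}"
      proof (cases "i \<in> F")
        case True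
        have "i \<noteq> i1"
        proof
          assume "i = i1"
          have iF: "z i1 \<noteq> 0" "i1 \<in> F" using i1(1) Z_def by auto
          have "\<nu>' i1 = 0 \<or> \<nu>' i1 = 1"
          proof (cases "z i1 > 0")
            case True
            then have "t * z i1 = 1 - \<nu> i1" using i1(2) by (auto simp: \<tau>_def field_simps)
            then show ?thesis using iF by (simp add: \<nu>'_def z0_def)
          next
            case False
            then have "z i1 < 0" using iF by simp
            then have "t * z i1 = - \<nu> i1" using i1(2) by (simp add: \<tau>_def field_simps)
            then show ?thesis using iF by (simp add: \<nu>'_def z0_def)
          qed
          then show False using i \<open>i = i1\<close> by auto
        qed
        then show ?thesis using True by simp
      next
        case False
        then have "\<nu>' i = \<nu> i" by (simp add: \<nu>'_def z0_def)
        then show ?thesis using i False F_def by auto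
      qed
    qed
    have "card {i\<in>I. 0 < \<nu>' i \<and> \<nu>' i < 1} < card F"
    proof -
      have "card {i\<in>I. 0 < \<nu>' i \<and> \<nu>' i < 1} \<le> card (F - {i1})" using sub fF by (intro card_mono) auto
      also have "\<dots> < card F" proof -
        have "i1 \<in> F" using i1(1) Z_def by auto
        then have "card F > 0" using fF card_gt_0_iff by blast
        then show ?thesis using \<open>i1 \<in> F\<close> fF by simp
      qed
      finally show ?thesis .
    qed
    then show ?thesis using less.hyps[of \<nu>'] range cons F_def by blast
  qed
qed

lemma list_sum_bound:
  fixes v :: "nat \<Rightarrow> 'c \<Rightarrow> real"
  assumes "\<forall>i\<in>set ys. \<bar>v i c\<bar> \<le> M c"
  shows "\<bar>\<Sum>i\<leftarrow>ys. v i c\<bar> \<le> real (length ys) * M c"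
  using assms
proof (induction ys)
  case Nil
  then show ?case by simp
next
  case (Cons y ys)
  have "\<bar>\<Sum>i\<leftarrow>y#ys. v i c\<bar> \<le> \<bar>v y c\<bar> + \<bar>\<Sum>i\<leftarrow>ys. v i c\<bar>" by (simp add: abs_triangle_ineq)
  also have "\<dots> \<le> M c + real (length ys) * M c" using Cons by (intro add_mono) auto
  finally show ?case by (simp add: algebra_simps)
qed

lemma any_order:
  fixes v :: "nat \<Rightarrow> 'c \<Rightarrow> real"
  assumes "finite I" "card I \<le> D" "\<forall>i\<in>I. \<forall>c. \<bar>v i c\<bar> \<le> M c" "\<forall>c. 0 \<le> M c"
  shows "\<exists>js. distinct js \<and> set js = I \<and> (\<forall>j c. \<bar>\<Sum>i\<leftarrow>take j js. v i c\<bar> \<le> real D * M c)"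
proof -
  define js where "js = sorted_list_of_set I"
  have d: "distinct js" "set js = I" using assms(1) js_def by auto
  have len: "length js = card I" using d distinct_card by fastforce
  have "\<bar>\<Sum>i\<leftarrow>take j js. v i c\<bar> \<le> real D * M c" for j c
  proof -
    have "\<forall>i\<in>set (take j js). \<bar>v i c\<bar> \<le> M c" using d assms(3) by (meson in_set_takeD)
    then have "\<bar>\<Sum>i\<leftarrow>take j js. v i c\<bar> \<le> real (length (take j js)) * M c" by (rule list_sum_bound)
    also have "\<dots> \<le> real D * M c" using len assms(2,4) by (intro mult_right_mono) auto
    finally show ?thesis .
  qed
  then show ?thesis using d by blast
qed

lemma gs_core:
  fixes v :: "nat \<Rightarrow> 'c::finite \<Rightarrow> real" and M :: "'c \<Rightarrow> real"
  assumes M0: "\<forall>c. 0 \<le> M c"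
  shows "finite I \<Longrightarrow> card I = k \<Longrightarrow> (\<forall>i\<in>I. \<forall>c. \<bar>v i c\<bar> \<le> M c) \<Longrightarrow>
    (\<forall>i\<in>I. 0 \<le> wt i \<and> wt i \<le> 1) \<Longrightarrow> (\<forall>c. (\<Sum>i\<in>I. wt i * v i c) = 0) \<Longrightarrow>
    (\<Sum>i\<in>I. wt i) = real k - real CARD('c) \<Longrightarrow>
    \<exists>js. distinct js \<and> set js = I \<and> (\<forall>j c. \<bar>\<Sum>i\<leftarrow>take j js. v i c\<bar> \<le> real CARD('c) * M c)"
proof (induction k arbitrary: I wt)
  case 0
  then show ?case using any_order[of I "CARD('c)" v M] M0 by simp
next
  case (Suc k)
  let ?D = "CARD('c)"
  show ?case
  proof (cases "Suc k \<le> ?D")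
    case True
    then show ?thesis using any_order[of I "CARD('c)" v M] M0 Suc.prems by simp
  next
    case False
    then have kD: "k \<ge> ?D" by simp
    define c0 where "c0 = (real k - real ?D) / (real (Suc k) - real ?D)"
    have c0: "0 \<le> c0" "c0 \<le> 1" using kD by (auto simp: c0_def)
    define \<mu> where "\<mu> = (\<lambda>i. c0 * wt i)"
    have \<mu>r: "\<forall>i\<in>I. 0 \<le> \<mu> i \<and> \<mu> i \<le> 1"
      using Suc.prems(4) c0 by (auto simp: \<mu>_def mult_le_one)
    define a :: "'c option \<Rightarrow> nat \<Rightarrow> real" where
      "a = (\<lambda>r i. case r of None \<Rightarrow> 1 | Some c \<Rightarrow> v i c)"
    define b :: "'c option \<Rightarrow> real" where
      "b = (\<lambda>r. case r of None \<Rightarrow> real k - real ?D | Some c \<Rightarrow> 0)"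
    have \<mu>c: "\<forall>r\<in>UNIV. (\<Sum>i\<in>I. \<mu> i * a r i) = b r"
    proof
      fix r :: "'c option"
      show "(\<Sum>i\<in>I. \<mu> i * a r i) = b r"
      proof (cases r)
        case None
        have "(\<Sum>i\<in>I. \<mu> i * a r i) = c0 * (\<Sum>i\<in>I. wt i)"
          using None by (simp add: a_def \<mu>_def sum_distrib_left)
        also have "\<dots> = real k - real ?D" using Suc.prems(6) kD by (simp add: c0_def)
        finally show ?thesis using None by (simp add: b_def)
      next
        case (Some c)
        have "(\<Sum>i\<in>I. \<mu> i * a r i) = c0 * (\<Sum>i\<in>I. wt i * v i c)"
          using Some by (simp add: a_def \<mu>_def sum_distrib_left mult.assoc)
        then show ?thesis using Some Suc.prems(5) by (simp add: b_def)
      qed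
    qed
    have "\<exists>\<nu>. (\<forall>i\<in>I. 0 \<le> \<nu> i \<and> \<nu> i \<le> 1) \<and> (\<forall>r\<in>UNIV. (\<Sum>i\<in>I. \<nu> i * a r i) = b r) \<and>
      card {i\<in>I. 0 < \<nu> i \<and> \<nu> i < 1} \<le> card (UNIV :: 'c option set)"
      by (rule basic_point[of "UNIV :: 'c option set" I \<mu> a b, OF finite_class.finite_UNIV Suc.prems(1) \<mu>r \<mu>c])
    then obtain \<nu> where \<nu>': "(\<forall>i\<in>I. 0 \<le> \<nu> i \<and> \<nu> i \<le> 1) \<and> (\<forall>r\<in>UNIV. (\<Sum>i\<in>I. \<nu> i * a r i) = b r) \<and>
      card {i\<in>I. 0 < \<nu> i \<and> \<nu> i < 1} \<le> card (UNIV :: 'c option set)" by (rule exE)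
    note \<nu> = conjunct1[OF \<nu>'] conjunct1[OF conjunct2[OF \<nu>']] conjunct2[OF conjunct2[OF \<nu>']]
    have \<nu>sum: "(\<Sum>i\<in>I. \<nu> i) = real k - real ?D"
      using \<nu>(2)[rule_format, of None] by (simp add: a_def b_def)
    have \<nu>v: "(\<Sum>i\<in>I. \<nu> i * v i c) = 0" for c
      using \<nu>(2)[rule_format, of "Some c"] by (simp add: a_def b_def)
    have cardFr: "card {i\<in>I. 0 < \<nu> i \<and> \<nu> i < 1} \<le> ?D + 1"
      using \<nu>(3) by simp
    have "\<exists>i0\<in>I. \<nu> i0 = 0"
    proof (rule ccontr)
      assume "\<not> ?thesis"
      then have pos: "\<forall>i\<in>I. 0 < \<nu> i" using \<nu>(1) by force
      define Fr where "Fr = {i\<in>I. 0 < \<nu> i \<and> \<nu> i < 1}"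
      have fFr: "finite Fr" using Suc.prems(1) Fr_def by simp
      have one: "\<forall>i\<in>I - Fr. \<nu> i = 1" using pos \<nu>(1) Fr_def by force
      have "(\<Sum>i\<in>I. \<nu> i) = (\<Sum>i\<in>I - Fr. \<nu> i) + (\<Sum>i\<in>Fr. \<nu> i)"
        using Suc.prems(1) Fr_def by (metis (no_types, lifting) mem_Collect_eq subsetI sum.subset_diff)
      also have "(\<Sum>i\<in>I - Fr. \<nu> i) = real (card (I - Fr))" using one by simp
      also have "card (I - Fr) = Suc k - card Fr"
        using Suc.prems(1,2) Fr_def by (simp add: card_Diff_subset)
      finally have eq: "real k - real ?D = real (Suc k - card Fr) + (\<Sum>i\<in>Fr. \<nu> i)" using \<nu>sum by simp
      have cFr: "card Fr \<le> Suc k" using Suc.prems(1,2) Fr_def by (metis card_mono mem_Collect_eq subsetI)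
      show False
      proof (cases "Fr = {}")
        case True
        then show False using eq by simp
      next
        case False
        then have "(\<Sum>i\<in>Fr. \<nu> i) > 0" using fFr Fr_def by (intro sum_pos) auto
        then have "card Fr > ?D + 1" using eq cFr by (simp add: of_nat_diff)
        then show False using cardFr Fr_def by simp
      qed
    qed
    then obtain i0 where i0: "i0 \<in> I" "\<nu> i0 = 0" by blast
    define I' where "I' = I - {i0}"
    have fI': "finite I'" "card I' = k" using Suc.prems(1,2) i0 I'_def by auto
    have sI': "(\<Sum>i\<in>I'. \<nu> i) = real k - real ?D"
      using \<nu>sum i0 Suc.prems(1) I'_def by (simp add: sum_diff1)
    have vI': "\<forall>c. (\<Sum>i\<in>I'. \<nu> i * v i c) = 0"
      using \<nu>v i0 Suc.prems(1) I'_def by (simp add: sum_diff1)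
    obtain js' where js': "distinct js'" "set js' = I'"
      "\<forall>j c. \<bar>\<Sum>i\<leftarrow>take j js'. v i c\<bar> \<le> real ?D * M c"
      using Suc.IH[OF fI' _ _ vI' sI'] Suc.prems(3) \<nu>(1) I'_def by auto
    define js where "js = js' @ [i0]"
    have d: "distinct js" "set js = I" using js' i0 I'_def js_def by auto
    have len: "length js' = k" using js' fI' distinct_card by fastforce
    have "\<bar>\<Sum>i\<leftarrow>take j js. v i c\<bar> \<le> real ?D * M c" for j c
    proof (cases "j \<le> k")
      case True
      then have "take j js = take j js'" using len js_def by simp
      then show ?thesis using js'(3) by simp
    next
      case False
      then have "take j js = js" using len js_def by simp
      then have "(\<Sum>i\<leftarrow>take j js. v i c) = (\<Sum>i\<in>I. v i c)"
        using d by (simp add: sum_list_distinct_conv_sum_set)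
      also have "\<dots> = (\<Sum>i\<in>I. (1 - wt i) * v i c)"
        using Suc.prems(5) by (simp add: left_diff_distrib sum_subtractf)
      finally have eq: "(\<Sum>i\<leftarrow>take j js. v i c) = (\<Sum>i\<in>I. (1 - wt i) * v i c)" .
      have "\<bar>\<Sum>i\<in>I. (1 - wt i) * v i c\<bar> \<le> (\<Sum>i\<in>I. \<bar>(1 - wt i) * v i c\<bar>)" by (rule sum_abs)
      also have "\<dots> \<le> (\<Sum>i\<in>I. (1 - wt i) * M c)"
      proof (intro sum_mono)
        fix i assume "i \<in> I"
        then have "0 \<le> 1 - wt i" "\<bar>v i c\<bar> \<le> M c" using Suc.prems(3,4) by auto
        then show "\<bar>(1 - wt i) * v i c\<bar> \<le> (1 - wt i) * M c"
          by (simp add: abs_mult mult_left_mono)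
      qed
      also have "\<dots> = (real (Suc k) - (\<Sum>i\<in>I. wt i)) * M c"
        using Suc.prems(2) by (simp add: sum_distrib_right[symmetric] sum_subtractf)
      also have "\<dots> = real ?D * M c" using Suc.prems(6) by simp
      finally show ?thesis using eq by simp
    qed
    then show ?thesis using d by blast
  qed
qed

lemma mset_take_sub: "mset (take b xs) \<subseteq># mset xs"
  by (metis append_take_drop_id mset_append mset_subset_eq_add_left)

lemma mset_drop_sub: "mset (drop b xs) \<subseteq># mset xs"
  by (metis append_take_drop_id mset_append mset_subset_eq_add_right)

lemma steinitz:
  fixes f :: "'b \<Rightarrow> 'c::finite \<Rightarrow> real" and xs :: "'b list" and M :: "'c \<Rightarrow> real"
  assumes sum0: "\<forall>c. (\<Sum>x\<leftarrow>xs. f x c) = 0" and bnd: "\<forall>x\<in>set xs. \<forall>c. \<bar>f x c\<bar> \<le> M c"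
    and M0: "\<forall>c. 0 \<le> M c"
  shows "\<exists>ys. mset ys = mset xs \<and> (\<forall>j c. \<bar>\<Sum>x\<leftarrow>take j ys. f x c\<bar> \<le> real CARD('c) * M c)"
proof -
  define m where "m = length xs"
  define v where "v = (\<lambda>i c. f (xs ! i) c)"
  define I where "I = {..<m}"
  have fI: "finite I" "card I = m" using I_def by auto
  have vb: "\<forall>i\<in>I. \<forall>c. \<bar>v i c\<bar> \<le> M c" using bnd I_def m_def v_def by auto
  have vs: "(\<Sum>i\<in>I. v i c) = 0" for c
  proof -
    have "(\<Sum>x\<leftarrow>xs. f x c) = (\<Sum>i = 0..<length xs. (map (\<lambda>x. f x c) xs) ! i)"
      by (subst sum_list_sum_nth) simp
    also have "\<dots> = (\<Sum>i\<in>I. v i c)" using I_def m_def v_def lessThan_atLeast0 by (intro sum.cong) auto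
    finally show ?thesis using sum0 by simp
  qed
  obtain js where js: "distinct js" "set js = I" "\<forall>j c. \<bar>\<Sum>i\<leftarrow>take j js. v i c\<bar> \<le> real CARD('c) * M c"
  proof (cases "m \<le> CARD('c)")
    case True
    then show ?thesis using any_order[OF fI(1) _ vb M0] fI(2) that by auto
  next
    case False
    define wt where "wt = (\<lambda>i::nat. (real m - real CARD('c)) / real m)"
    have r: "\<forall>i\<in>I. 0 \<le> wt i \<and> wt i \<le> 1" using False by (auto simp: wt_def)
    have s1: "\<forall>c. (\<Sum>i\<in>I. wt i * v i c) = 0" unfolding wt_def sum_distrib_left[symmetric] using vs by simp
    have s2: "(\<Sum>i\<in>I. wt i) = real m - real CARD('c)" using fI False by (simp add: wt_def)
    show ?thesis using gs_core[OF M0 fI vb r s1 s2] that by blast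
  qed
  define ys where "ys = map (\<lambda>i. xs ! i) js"
  have "mset js = mset [0..<m]"
    using js(1,2) I_def by (metis distinct_upt lessThan_atLeast0 mset_set_set set_upt)
  then have "mset ys = mset xs"
    unfolding ys_def by (metis m_def map_nth mset_map)
  moreover have "\<bar>\<Sum>x\<leftarrow>take j ys. f x c\<bar> \<le> real CARD('c) * M c" for j c
  proof -
    have "(\<Sum>x\<leftarrow>take j ys. f x c) = (\<Sum>i\<leftarrow>take j js. v i c)"
      by (simp add: ys_def take_map v_def comp_def)
    then show ?thesis using js(3) by simp
  qed
  ultimately show ?thesis by blast
qed

lemma davenport:
  fixes S :: "'a::{finite,ab_group_add} multiset"
  assumes "size S \<ge> CARD('a)"
  shows "\<exists>T. T \<subseteq># S \<and> T \<noteq> {#} \<and> sum_mset T = 0"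
proof -
  obtain xs where xs: "mset xs = S" using ex_mset by blast
  define n where "n = CARD('a)"
  define ps where "ps = (\<lambda>j. sum_list (take j xs))"
  have "\<not> inj_on ps {0..n}"
  proof
    assume "inj_on ps {0..n}"
    then have "card (ps ` {0..n}) = n + 1" by (simp add: card_image)
    moreover have "card (ps ` {0..n}) \<le> n" unfolding n_def by (rule card_mono) auto
    ultimately show False by simp
  qed
  then obtain a b where ab: "a \<in> {0..n}" "b \<in> {0..n}" "a \<noteq> b" "ps a = ps b"
    unfolding inj_on_def by blast
  obtain a' b' where ab': "a' < b'" "b' \<le> n" "ps a' = ps b'"
  proof (cases "a < b")
    case True then show ?thesis using ab that by auto
  next
    case False then show ?thesis using ab that[of b a] by auto
  qed
  define T where "T = mset (drop a' (take b' xs))"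
  have lenx: "length xs = size S" using xs by auto
  have "take b' xs = take a' xs @ drop a' (take b' xs)"
    using ab' by (metis append_take_drop_id less_imp_le_nat min.absorb1 take_take)
  then have "ps b' = ps a' + sum_list (drop a' (take b' xs))" unfolding ps_def
    by (metis sum_list_append)
  then have "sum_mset T = 0" using ab' by (simp add: T_def sum_mset_sum_list)
  moreover have "T \<subseteq># S" unfolding T_def using xs
    by (metis mset_drop_sub mset_take_sub subset_mset.order_trans)
  moreover have "T \<noteq> {#}" using ab' assms lenx n_def by (simp add: T_def)
  ultimately show ?thesis by blast
qed

lemma atom_size:
  fixes A :: "'a::{finite,ab_group_add} multiset"
  assumes "minimal_zero_sum A"
  shows "size A \<le> CARD('a)"
proof (rule ccontr)
  assume "\<not> ?thesis"
  then have big: "size A > CARD('a)" by simp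
  obtain xs where xs: "mset xs = A" using ex_mset by blast
  define S where "S = mset (take CARD('a) xs)"
  have SA: "S \<subseteq># A" using xs S_def mset_take_sub by blast
  have sS: "size S = CARD('a)" using big xs S_def by auto
  obtain T where T: "T \<subseteq># S" "T \<noteq> {#}" "sum_mset T = 0" using davenport[of S] sS by auto
  have "T = A" using assms T SA unfolding minimal_zero_sum_def zero_sum_def
    by (meson subset_mset.order_trans)
  then have "size A \<le> size S" using T(1) by (simp add: size_mset_mono)
  then show False using sS big by simp
qed

datatype 'b itm = L 'b | R 'b | DL | DR

fun lsel :: "'b itm \<Rightarrow> 'b multiset" where
  "lsel (L A) = {#A#}" | "lsel (R A) = {#}" | "lsel DL = {#}" | "lsel DR = {#}"

fun rsel :: "'b itm \<Rightarrow> 'b multiset" where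
  "rsel (L A) = {#}" | "rsel (R A) = {#A#}" | "rsel DL = {#}" | "rsel DR = {#}"

definition lpart :: "'b itm multiset \<Rightarrow> 'b multiset" where
  "lpart M = sum_mset (image_mset lsel M)"
definition rpart :: "'b itm multiset \<Rightarrow> 'b multiset" where
  "rpart M = sum_mset (image_mset rsel M)"

fun vec :: "'a multiset itm \<Rightarrow> 'a option \<Rightarrow> int" where
  "vec (L A) c = (case c of None \<Rightarrow> 1 | Some g \<Rightarrow> int (count A g))"
| "vec (R A) c = - (case c of None \<Rightarrow> 1 | Some g \<Rightarrow> int (count A g))"
| "vec DL c = (case c of None \<Rightarrow> 1 | Some g \<Rightarrow> 0)"
| "vec DR c = (case c of None \<Rightarrow> -1 | Some g \<Rightarrow> 0)"

lemma lpart_add[simp]: "lpart (M + N) = lpart M + lpart N" "rpart (M + N) = rpart M + rpart N"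
  by (simp_all add: lpart_def rpart_def)

lemma lpart_simps[simp]:
  "lpart {#} = {#}" "rpart {#} = {#}"
  "lpart (add_mset x M) = lsel x + lpart M" "rpart (add_mset x M) = rsel x + rpart M"
  by (simp_all add: lpart_def rpart_def)

lemma parts_image[simp]:
  "lpart (image_mset L X) = X" "rpart (image_mset L X) = {#}"
  "lpart (image_mset R X) = {#}" "rpart (image_mset R X) = X"
  "lpart (replicate_mset n DL) = {#}" "rpart (replicate_mset n DL) = {#}"
  "lpart (replicate_mset n DR) = {#}" "rpart (replicate_mset n DR) = {#}"
  by (induction X; simp; fail)+ (induction n; simp)+

lemma parts_mono:
  assumes "M \<subseteq># N"
  shows "lpart M \<subseteq># lpart N" "rpart M \<subseteq># rpart N"
proof -
  obtain P where "N = M + P" using assms by (metis subset_mset.add_diff_inverse)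
  then show "lpart M \<subseteq># lpart N" "rpart M \<subseteq># rpart N" by simp_all
qed

lemma vsum_some:
  "(\<Sum>x\<in>#M. vec x (Some g)) = int (count (sum_mset (lpart M)) g) - int (count (sum_mset (rpart M)) g)"
proof (induction M)
  case empty then show ?case by simp
next
  case (add x M) then show ?case by (cases x) auto
qed

lemma vsum_none:
  "(\<Sum>x\<in>#M. vec x None) = int (size (lpart M)) - int (size (rpart M)) + int (count M DL) - int (count M DR)"
proof (induction M)
  case empty then show ?case by simp
next
  case (add x M) then show ?case by (cases x) auto
qed

lemma size_parts:
  "size M = size (lpart M) + size (rpart M) + count M DL + count M DR"
proof (induction M)
  case empty then show ?case by simp
next
  case (add x M) then show ?case by (cases x) auto
qed

lemma parts_eq:
  assumes "M \<subseteq># N" "lpart M = lpart N" "rpart M = rpart N" "count M DL = count N DL"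
    "count M DR = count N DR"
  shows "M = N"
proof -
  have "size M = size N" using assms size_parts[of M] size_parts[of N] by simp
  then show ?thesis using assms(1) by (metis less_irrefl mset_subset_size subset_mset.le_less)
qed

lemma sum_atoms_empty:
  assumes "\<forall>A\<in>#X. A \<noteq> {#}" "sum_mset X = {#}"
  shows "X = {#}"
proof (rule ccontr)
  assume "X \<noteq> {#}"
  then obtain A Y where "X = add_mset A Y" by (metis multiset_cases)
  then show False using assms by auto
qed

lemma sum_list_mset_conv: "(\<Sum>x\<leftarrow>xs. h x) = (\<Sum>x\<in>#mset xs. h x)"
  by (metis mset_map sum_mset_sum_list)

lemma of_int_sum_list_conv: "(\<Sum>x\<leftarrow>xs. real_of_int (h x)) = real_of_int (\<Sum>x\<leftarrow>xs. h x)"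
  by (induction xs) auto

lemma box_card:
  fixes bd :: "'c::finite option \<Rightarrow> int"
  assumes "bd None = b0" "\<forall>g. bd (Some g) = b1" "b0 \<ge> 0" "b1 \<ge> 0"
  shows "card (Pi\<^sub>E UNIV (\<lambda>c. {-bd c..bd c})) = nat (2*b0+1) * nat (2*b1+1) ^ CARD('c)"
proof -
  have "card (Pi\<^sub>E UNIV (\<lambda>c. {-bd c..bd c})) = (\<Prod>c\<in>UNIV. card {-bd c..bd c})"
    by (rule card_PiE) simp
  also have "\<dots> = (\<Prod>c\<in>UNIV. nat (2 * bd c + 1))" by (intro prod.cong) auto
  also have "\<dots> = nat (2 * bd None + 1) * (\<Prod>c\<in>range Some. nat (2 * bd c + 1))"
    by (subst UNIV_option_conv) (simp add: prod.insert)
  also have "(\<Prod>c\<in>range Some. nat (2 * bd c + 1)) = (\<Prod>g\<in>(UNIV::'c set). nat (2 * bd (Some g) + 1))"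
    by (subst prod.reindex) (auto simp: inj_on_def)
  also have "\<dots> = nat (2*b1+1) ^ CARD('c)" using assms by simp
  finally show ?thesis using assms by simp
qed

lemma main_bound:
  fixes z :: "'a::{finite,ab_group_add} multiset multiset"
  assumes zf: "is_factorization z" and adj: "adjacent_lengths (fact_pi z) k (size z)"
  shows "\<exists>x. is_factorization x \<and> fact_pi x = fact_pi z \<and> size x = k \<and>
           fact_dist x z \<le> (2*CARD('a)+3) * (2*(CARD('a)+1)*CARD('a)+1)^CARD('a)"
proof -
  define n where "n = CARD('a)"
  define B where "B = fact_pi z"
  define l where "l = size z"
  define K where "K = (2*n+3) * (2*(n+1)*n+1)^n"
  have kin: "k \<in> lengths B" and kl: "k \<noteq> l"
    and noint: "\<not> (\<exists>m\<in>lengths B. min k l < m \<and> m < max k l)"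
    using adj unfolding adjacent_lengths_def B_def l_def by auto
  define PP where "PP = (\<lambda>x. is_factorization x \<and> sum_mset x = B \<and> size x = k)"
  obtain x0 where "PP x0" using kin unfolding lengths_def PP_def fact_pi_def by auto
  then obtain \<xi> where \<xi>: "PP \<xi>" and min\<xi>: "\<forall>y. PP y \<longrightarrow> size (\<xi> - \<xi> \<inter># z) \<le> size (y - y \<inter># z)"
    using ex_has_least_nat[of PP x0 "\<lambda>y. size (y - y \<inter># z)"] by blast
  define g where "g = \<xi> \<inter># z"
  define \<zeta>' where "\<zeta>' = z - g"
  define \<xi>' where "\<xi>' = \<xi> - g"
  have gz: "g \<subseteq># z" and g\<xi>: "g \<subseteq># \<xi>" unfolding g_def by auto
  have zdec: "z = \<zeta>' + g" using gz \<zeta>'_def by simp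
  have \<xi>dec: "\<xi> = \<xi>' + g" using g\<xi> \<xi>'_def by simp
  have Bz: "sum_mset z = B" unfolding B_def fact_pi_def by simp
  have B\<xi>: "sum_mset \<xi> = B" using \<xi> PP_def by simp
  have sums: "sum_mset \<zeta>' = sum_mset \<xi>'"
    using Bz B\<xi> zdec \<xi>dec by (metis add_right_cancel sum_mset.union)
  have sz: "size \<zeta>' + size g = l" using zdec l_def by (metis size_union)
  have s\<xi>: "size \<xi>' + size g = k" using \<xi>dec \<xi> PP_def by (metis size_union)
  have at\<zeta>: "\<forall>A\<in>#\<zeta>'. minimal_zero_sum A"
    using zf zdec unfolding is_factorization_def by (metis union_iff)
  have at\<xi>: "\<forall>A\<in>#\<xi>'. minimal_zero_sum A"
    using \<xi> \<xi>dec unfolding PP_def is_factorization_def by (metis union_iff)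
  have dist: "fact_dist \<xi> z = max (size \<xi>') (size \<zeta>')"
    unfolding fact_dist_def g_def \<zeta>'_def \<xi>'_def by (simp add: inf.commute)
  have key: "size \<zeta>' + size \<xi>' \<le> K"
  proof (rule ccontr)
    assume big: "\<not> size \<zeta>' + size \<xi>' \<le> K"
    define I where "I = image_mset L \<zeta>' + image_mset R \<xi>' + replicate_mset (k - l) DL + replicate_mset (l - k) DR"
    have lpI: "lpart I = \<zeta>'" and rpI: "rpart I = \<xi>'" unfolding I_def by simp_all
    have cDL: "count I DL = k - l" and cDR: "count I DR = l - k" unfolding I_def by (auto simp: count_eq_zero_iff)
    define T where "T = size I"
    have TK: "T > K" using big size_parts[of I] lpI rpI T_def by simp
    have Isum: "(\<Sum>x\<in>#I. vec x c) = 0" for c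
    proof (cases c)
      case None
      have "int (size \<zeta>') - int (size \<xi>') + int (k - l) - int (l - k) = 0" using sz s\<xi> by linarith
      then show ?thesis using None vsum_none[of I] lpI rpI cDL cDR by simp
    next
      case (Some h)
      then show ?thesis using vsum_some[where M=I and g=h] lpI rpI sums by simp
    qed
    obtain xs where xs: "mset xs = I" using ex_mset by blast
    define f :: "'a multiset itm \<Rightarrow> 'a option \<Rightarrow> real" where "f = (\<lambda>x c. real_of_int (vec x c))"
    define M :: "'a option \<Rightarrow> real" where "M = (\<lambda>c. case c of None \<Rightarrow> 1 | Some _ \<Rightarrow> real n)"
    have sum0: "\<forall>c. (\<Sum>x\<leftarrow>xs. f x c) = 0"
      using Isum xs by (simp add: f_def of_int_sum_list_conv sum_list_mset_conv)
    have bnd: "\<forall>x\<in>set xs. \<forall>c. \<bar>f x c\<bar> \<le> M c"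
    proof (intro ballI allI)
      fix x c assume "x \<in> set xs"
      then have xI: "x \<in># I" using xs by (metis set_mset_mset)
      show "\<bar>f x c\<bar> \<le> M c"
      proof (cases x)
        case (L A)
        then have "A \<in># \<zeta>'" using xI unfolding I_def by (auto split: if_splits)
        then have sA: "size A \<le> n" using at\<zeta> atom_size n_def by blast
        have "count A h \<le> n" for h using sA count_le_size[of A h] by linarith
        then show ?thesis using L by (cases c) (auto simp: f_def M_def)
      next
        case (R A)
        then have "A \<in># \<xi>'" using xI unfolding I_def by (auto split: if_splits)
        then have sA: "size A \<le> n" using at\<xi> atom_size n_def by blast
        have "count A h \<le> n" for h using sA count_le_size[of A h] by linarith
        then show ?thesis using R by (cases c) (auto simp: f_def M_def)
      next
        case DL
        then show ?thesis by (cases c) (auto simp: f_def M_def)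
      next
        case DR
        then show ?thesis by (cases c) (auto simp: f_def M_def)
      qed
    qed
    have M0: "\<forall>c. 0 \<le> M c" by (simp add: M_def split: option.split)
    obtain ys where ys: "mset ys = I" "\<forall>j c. \<bar>\<Sum>x\<leftarrow>take j ys. f x c\<bar> \<le> real CARD('a option) * M c"
      using steinitz[OF sum0 bnd M0] xs by auto
    have lenys: "length ys = T" using ys T_def by (metis size_mset)
    define P where "P = (\<lambda>j c. \<Sum>x\<leftarrow>take j ys. vec x c)"
    define bd :: "'a option \<Rightarrow> int" where "bd = (\<lambda>c. case c of None \<Rightarrow> int (n+1) | Some _ \<Rightarrow> int ((n+1)*n))"
    have Pb: "\<bar>P j c\<bar> \<le> bd c" for j c
    proof -
      have "(\<Sum>x\<leftarrow>take j ys. f x c) = real_of_int (P j c)"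
        by (simp add: P_def f_def of_int_sum_list_conv)
      then have r: "real_of_int \<bar>P j c\<bar> \<le> real (n+1) * M c"
        using spec[OF spec[OF ys(2), of j], of c] by (simp add: n_def)
      show ?thesis
      proof (cases c)
        case None
        then have "real_of_int \<bar>P j c\<bar> \<le> real_of_int (int (n+1))" using r by (simp add: M_def algebra_simps)
        then show ?thesis using None by (simp only: of_int_le_iff bd_def option.case)
      next
        case (Some h)
        then have "real_of_int \<bar>P j c\<bar> \<le> real_of_int (int ((n+1)*n))" using r by (simp add: M_def algebra_simps)
        then show ?thesis using Some by (simp only: of_int_le_iff bd_def option.case)
      qed
    qed
    define box where "box = Pi\<^sub>E UNIV (\<lambda>c. {-bd c..bd c})"
    have cbox: "card box = K"
    proof -
      have "card box = nat (2 * int (n+1) + 1) * nat (2 * int ((n+1)*n) + 1) ^ CARD('a)"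
        unfolding box_def by (rule box_card) (auto simp: bd_def)
      also have "\<dots> = K" unfolding K_def n_def by (simp add: nat_mult_distrib nat_add_distrib algebra_simps)
      finally show ?thesis .
    qed
    have Pin: "P ` {..<T} \<subseteq> box" using Pb unfolding box_def by (auto simp: PiE_UNIV_domain abs_le_iff minus_le_iff)
    have "\<not> inj_on P {..<T}"
    proof
      assume "inj_on P {..<T}"
      then have "card (P ` {..<T}) = T" by (simp add: card_image)
      moreover have "card (P ` {..<T}) \<le> card box" using Pin unfolding box_def
        by (intro card_mono) (auto intro!: finite_PiE)
      ultimately show False using cbox TK by simp
    qed
    then obtain a0 b0 where ab0: "a0 < T" "b0 < T" "a0 \<noteq> b0" "P a0 = P b0"
      unfolding inj_on_def by auto
    obtain a b where ab: "a < b" "b < T" "P a = P b"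
    proof (cases "a0 < b0")
      case True then show ?thesis using ab0 that by auto
    next
      case False then show ?thesis using ab0 that[of b0 a0] by auto
    qed
    define Mb where "Mb = mset (drop a (take b ys))"
    have MbI: "Mb \<subseteq># I" unfolding Mb_def using ys(1)
      by (metis mset_drop_sub mset_take_sub subset_mset.order_trans)
    have sMb: "size Mb = b - a" using ab lenys by (simp add: Mb_def)
    have Mbsum: "(\<Sum>x\<in>#Mb. vec x c) = 0" for c
    proof -
      have "take b ys = take a ys @ drop a (take b ys)"
        using ab by (metis append_take_drop_id less_imp_le_nat min.absorb1 take_take)
      then have "P b c = P a c + (\<Sum>x\<leftarrow>drop a (take b ys). vec x c)" unfolding P_def
        by (metis map_append sum_list_append)
      then show ?thesis using ab(3) by (simp add: Mb_def sum_list_mset_conv)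
    qed
    define \<alpha> where "\<alpha> = lpart Mb"
    define \<beta> where "\<beta> = rpart Mb"
    define eL where "eL = count Mb DL"
    define eR where "eR = count Mb DR"
    have \<alpha>sub: "\<alpha> \<subseteq># \<zeta>'" using parts_mono[OF MbI] lpI \<alpha>_def by simp
    have \<beta>sub: "\<beta> \<subseteq># \<xi>'" using parts_mono[OF MbI] rpI \<beta>_def by simp
    have eLb: "eL \<le> k - l" using MbI cDL eL_def by (metis mset_subset_eq_count)
    have eRb: "eR \<le> l - k" using MbI cDR eR_def by (metis mset_subset_eq_count)
    have sab: "sum_mset \<alpha> = sum_mset \<beta>"
    proof (rule multiset_eqI)
      fix h
      show "count (sum_mset \<alpha>) h = count (sum_mset \<beta>) h"
        using Mbsum[of "Some h"] vsum_some[where M=Mb and g=h] \<alpha>_def \<beta>_def by simp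
    qed
    have dab: "int (size \<alpha>) - int (size \<beta>) + int eL - int eR = 0"
      using Mbsum[of None] vsum_none[of Mb] \<alpha>_def \<beta>_def eL_def eR_def by simp
    have sMb2: "size Mb = size \<alpha> + size \<beta> + eL + eR"
      using size_parts[of Mb] \<alpha>_def \<beta>_def eL_def eR_def by simp
    have ne\<alpha>: "\<forall>A\<in>#\<alpha>. A \<noteq> {#}" using at\<zeta> \<alpha>sub unfolding minimal_zero_sum_def
      by (meson mset_subset_eqD)
    have ne\<beta>: "\<forall>A\<in>#\<beta>. A \<noteq> {#}" using at\<xi> \<beta>sub unfolding minimal_zero_sum_def
      by (meson mset_subset_eqD)
    have Mbpos: "size Mb > 0" using sMb ab by simp
    have \<beta>ne: "\<beta> \<noteq> {#}"
    proof
      assume "\<beta> = {#}"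
      then have "\<alpha> = {#}" using sab ne\<alpha> sum_atoms_empty by fastforce
      then have "eL = eR" using dab \<open>\<beta> = {#}\<close> by simp
      then have "eL = 0 \<and> eR = 0" using eLb eRb by linarith
      then show False using sMb2 Mbpos \<open>\<beta> = {#}\<close> \<open>\<alpha> = {#}\<close> by simp
    qed
    have \<beta>\<xi>: "\<beta> \<subseteq># \<xi>" using \<beta>sub \<xi>dec by (metis mset_subset_eq_add_left subset_mset.order_trans)
    have \<alpha>z: "\<alpha> \<subseteq># z" using \<alpha>sub zdec by (metis mset_subset_eq_add_left subset_mset.order_trans)
    define x1 where "x1 = \<xi> - \<beta> + \<alpha>"
    have fx1: "is_factorization x1"
      using \<xi> \<alpha>z zf unfolding x1_def PP_def is_factorization_def
      by (metis in_diffD mset_subset_eqD union_iff)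
    have sx1: "sum_mset x1 = B"
    proof -
      have "sum_mset \<xi> = sum_mset (\<xi> - \<beta>) + sum_mset \<beta>" using \<beta>\<xi>
        by (metis subset_mset.diff_add sum_mset.union)
      then show ?thesis using B\<xi> sab unfolding x1_def by simp
    qed
    have zx1: "int (size x1) = int k - int (size \<beta>) + int (size \<alpha>)"
    proof -
      have e0: "size x1 = size (\<xi> - \<beta>) + size \<alpha>" unfolding x1_def by (rule size_union)
      have e1: "size (\<xi> - \<beta>) = k - size \<beta>" using \<beta>\<xi> \<xi> unfolding PP_def by (simp add: size_Diff_submset)
      have e2: "size \<beta> \<le> k" using size_mset_mono[OF \<beta>\<xi>] \<xi> unfolding PP_def by simp
      show ?thesis using e0 e1 e2 by simp
    qed
    have len1: "size x1 \<in> lengths B" using fx1 sx1 unfolding lengths_def fact_pi_def by auto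
    have \<xi>'eq: "\<xi> - \<xi> \<inter># z = \<xi>'" unfolding \<xi>'_def g_def ..
    show False
    proof (cases "int (size \<alpha>) = int (size \<beta>)")
      case True
      have PPx1: "PP x1" using fx1 sx1 zx1 True unfolding PP_def by simp
      have "g + \<alpha> \<subseteq># z" using zdec \<alpha>sub by (metis add.commute subset_mset.add_left_mono)
      moreover have "g + \<alpha> \<subseteq># x1"
      proof -
        have "\<xi> - \<beta> = (\<xi>' - \<beta>) + g" using \<xi>dec \<beta>sub by (metis subset_mset.diff_add_assoc2)
        then show ?thesis unfolding x1_def by (metis add.commute mset_subset_eq_add_left subset_mset.add_right_mono)
      qed
      ultimately have gi: "g + \<alpha> \<subseteq># x1 \<inter># z" by simp
      have "size (x1 - x1 \<inter># z) = size x1 - size (x1 \<inter># z)" by (rule size_Diff_submset) simp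
      also have "\<dots> \<le> size x1 - (size g + size \<alpha>)"
      proof -
        have "size (g + \<alpha>) \<le> size (x1 \<inter># z)" by (rule size_mset_mono[OF gi])
        then show ?thesis by simp
      qed
      finally have lt1: "size (x1 - x1 \<inter># z) \<le> size x1 - (size g + size \<alpha>)" .
      have sx: "size x1 = k" using zx1 True by simp
      have bpos: "size \<beta> > 0" using \<beta>ne by (simp add: nonempty_has_size)
      have bl: "size \<beta> \<le> size \<xi>'" by (rule size_mset_mono[OF \<beta>sub])
      have "size (x1 - x1 \<inter># z) < size \<xi>'" using lt1 sx True s\<xi> bpos bl by simp
      moreover have "size (\<xi> - \<xi> \<inter># z) \<le> size (x1 - x1 \<inter># z)" using min\<xi> PPx1 by blast
      ultimately show False using \<xi>'eq by simp
    next
      case False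
      show False
      proof (cases "int (size \<alpha>) - int (size \<beta>) = int l - int k")
        case True
        define y where "y = z - \<alpha> + \<beta>"
        have fy: "is_factorization y"
          using \<xi> \<beta>\<xi> zf unfolding y_def PP_def is_factorization_def
          by (metis in_diffD mset_subset_eqD union_iff)
        have sy: "sum_mset y = B"
        proof -
          have "sum_mset z = sum_mset (z - \<alpha>) + sum_mset \<alpha>" using \<alpha>z
            by (metis subset_mset.diff_add sum_mset.union)
          then show ?thesis using Bz sab unfolding y_def by simp
        qed
        have zy: "int (size y) = int l - int (size \<alpha>) + int (size \<beta>)"
        proof -
          have e0: "size y = size (z - \<alpha>) + size \<beta>" unfolding y_def by (rule size_union)
          have e1: "size (z - \<alpha>) = l - size \<alpha>" using \<alpha>z unfolding l_def by (simp add: size_Diff_submset)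
          have e2: "size \<alpha> \<le> l" using size_mset_mono[OF \<alpha>z] unfolding l_def by simp
          show ?thesis using e0 e1 e2 by simp
        qed
        have PPy: "PP y" using fy sy zy True unfolding PP_def by simp
        have zi: "z - \<alpha> \<subseteq># y \<inter># z" unfolding y_def by simp
        have "size (y - y \<inter># z) = size y - size (y \<inter># z)" by (rule size_Diff_submset) simp
        also have "\<dots> \<le> size y - size (z - \<alpha>)"
        proof -
          have "size (z - \<alpha>) \<le> size (y \<inter># z)" by (rule size_mset_mono[OF zi])
          then show ?thesis by simp
        qed
        also have "\<dots> = size \<beta>" using zy \<alpha>z l_def by (simp add: size_Diff_submset size_mset_mono)
        finally have yb: "size (y - y \<inter># z) \<le> size \<beta>" .
        have "\<beta> \<noteq> \<xi>'"
        proof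
          assume "\<beta> = \<xi>'"
          then have "sum_mset \<alpha> = sum_mset \<zeta>'" using sab sums by simp
          moreover have "sum_mset \<zeta>' = sum_mset (\<zeta>' - \<alpha>) + sum_mset \<alpha>" using \<alpha>sub
            by (metis subset_mset.diff_add sum_mset.union)
          ultimately have "sum_mset (\<zeta>' - \<alpha>) = {#}" by simp
          moreover have "\<forall>A\<in>#\<zeta>' - \<alpha>. A \<noteq> {#}" using at\<zeta> unfolding minimal_zero_sum_def
            by (meson in_diffD)
          ultimately have "\<zeta>' - \<alpha> = {#}" using sum_atoms_empty by blast
          then have "\<alpha> = \<zeta>'" using \<alpha>sub by (metis subset_mset.antisym subset_mset.diff_add add_0)
          have "eL = k - l \<and> eR = l - k" using dab True eLb eRb \<open>\<beta> = \<xi>'\<close> \<open>\<alpha> = \<zeta>'\<close> by linarith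
          then have "Mb = I" using parts_eq[OF MbI] \<open>\<beta> = \<xi>'\<close> \<open>\<alpha> = \<zeta>'\<close> lpI rpI cDL cDR
            \<alpha>_def \<beta>_def eL_def eR_def by simp
          then show False using sMb ab T_def by simp
        qed
        then have "size \<beta> < size \<xi>'" using \<beta>sub by (simp add: mset_subset_size subset_mset.le_less)
        moreover have "size (\<xi> - \<xi> \<inter># z) \<le> size (y - y \<inter># z)" using min\<xi> PPy by blast
        ultimately show False using \<xi>'eq yb by simp
      next
        case False2: False
        have "min k l < size x1 \<and> size x1 < max k l"
          using False False2 zx1 dab eLb eRb kl by linarith
        then show False using noint len1 by blast
      qed
    qed
  qed
  have "fact_dist \<xi> z \<le> K" using dist key by simp
  then show ?thesis using \<xi> unfolding PP_def K_def n_def B_def fact_pi_def by auto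
qed

lemma num_bound:
  fixes n :: nat
  assumes "n \<ge> 2"
  shows "(2*n+3) * (2*(n+1)*n+1)^n \<le> (2*n)^(3*n+1)"
proof -
  have nn: "2*n \<le> n*n" using assms by (metis mult_le_mono1)
  have e1: "(2*n)^2 = 4*(n*n)" by (simp add: power2_eq_square)
  have e2: "2*(n+1)*n+1 = 2*(n*n)+2*n+1" by (simp add: algebra_simps)
  have a: "2*(n+1)*n+1 \<le> (2*n)^2" using nn e1 e2 assms by linarith
  have "(2*(n+1)*n+1)^n \<le> ((2*n)^2)^n" by (rule power_mono[OF a]) simp
  also have "\<dots> = (2*n)^(2*n)" by (rule power_mult[symmetric])
  finally have b: "(2*(n+1)*n+1)^n \<le> (2*n)^(2*n)" .
  have "(2*n)^2 \<le> (2*n)^(n+1)" using assms by (intro power_increasing) auto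
  moreover have "2*n+3 \<le> (2*n)^2" using nn e1 assms by linarith
  ultimately have c: "2*n+3 \<le> (2*n)^(n+1)" by linarith
  have "(2*n+3) * (2*(n+1)*n+1)^n \<le> (2*n)^(n+1) * (2*n)^(2*n)" using mult_le_mono[OF c b] .
  also have "\<dots> = (2*n)^((n+1)+2*n)" by (rule power_add[symmetric])
  also have "\<dots> = (2*n)^(3*n+1)" by (rule arg_cong[where f="\<lambda>k. (2*n)^k"]) simp
  finally show ?thesis .
qed

lemma size_sum_mset_atoms:
  fixes y :: "'a multiset multiset"
  assumes "\<forall>A\<in>#y. size A = 1"
  shows "size (sum_mset y) = size y"
  using assms by (induction y) auto

lemma delta_bound:
  fixes z :: "'a::{finite,ab_group_add} multiset multiset"
  assumes zf: "is_factorization z"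
  shows "delta_fact z \<le> (2 * CARD('a)) ^ (3 * CARD('a) + 1)"
proof -
  define Kb where "Kb = (2 * CARD('a)) ^ (3 * CARD('a) + 1)"
  have "\<forall>k::nat. k \<ge> 1 \<and> adjacent_lengths (fact_pi z) k (size z) \<longrightarrow>
      (\<exists>x. is_factorization x \<and> fact_pi x = fact_pi z \<and> size x = k \<and> fact_dist x z \<le> Kb)"
  proof (intro allI impI)
    fix k :: nat
    assume h: "k \<ge> 1 \<and> adjacent_lengths (fact_pi z) k (size z)"
    show "\<exists>x. is_factorization x \<and> fact_pi x = fact_pi z \<and> size x = k \<and> fact_dist x z \<le> Kb"
    proof (cases "CARD('a) \<ge> 2")
      case True
      obtain x where x: "is_factorization x" "fact_pi x = fact_pi z" "size x = k"
        "fact_dist x z \<le> (2*CARD('a)+3) * (2*(CARD('a)+1)*CARD('a)+1)^CARD('a)"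
        using main_bound[OF zf, of k] h by blast
      then have "fact_dist x z \<le> Kb" using num_bound[OF True] Kb_def by linarith
      then show ?thesis using x by blast
    next
      case False
      have "CARD('a) > 0" by (rule finite_UNIV_card_ge_0) (rule finite_class.finite_UNIV)
      then have c1: "CARD('a) = 1" using False by linarith
      have one: "size A = 1" if "minimal_zero_sum A" for A :: "'a multiset"
      proof -
        have "size A \<le> 1" using atom_size[OF that] c1 by simp
        moreover have "A \<noteq> {#}" using that minimal_zero_sum_def by blast
        ultimately show ?thesis by (metis le_neq_implies_less less_one size_eq_0_iff_empty)
      qed
      have len: "m = size (fact_pi z)" if m_in: "m \<in> lengths (fact_pi z)" for m
      proof -
        obtain y where y: "m = size y" "is_factorization y" "fact_pi y = fact_pi z"
          using m_in unfolding lengths_def by blast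
        have "\<forall>A\<in>#y. size A = 1" using y(2) one unfolding is_factorization_def by blast
        then have "size (sum_mset y) = size y" by (rule size_sum_mset_atoms)
        then show ?thesis using y unfolding fact_pi_def by simp
      qed
      have "k \<in> lengths (fact_pi z)" "size z \<in> lengths (fact_pi z)" "k \<noteq> size z"
        using h unfolding adjacent_lengths_def by auto
      then show ?thesis using len[of k] len[of "size z"] by simp
    qed
  qed
  then show ?thesis unfolding delta_fact_def Kb_def by (rule Least_le)
qed

theorem theorem6p5:
  shows "successive_distance TYPE('a::{finite,ab_group_add})
           \<le> enat ((2 * card (UNIV :: 'a set)) ^ (3 * card (UNIV :: 'a set) + 1))"
  unfolding successive_distance_def
proof (rule Sup_least)
  fix e assume "e \<in> (\<lambda>z. enat (delta_fact z)) ` {z :: 'a multiset multiset. is_factorization z}"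
  then obtain z :: "'a multiset multiset" where z: "is_factorization z" "e = enat (delta_fact z)" by blast
  have "delta_fact z \<le> (2 * CARD('a)) ^ (3 * CARD('a) + 1)" by (rule delta_bound[OF z(1)])
  then show "e \<le> enat ((2 * card (UNIV :: 'a set)) ^ (3 * card (UNIV :: 'a set) + 1))"
    using z(2) by (simp only: enat_ord_simps)
qed

end
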